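(* Let $G$ be a discrete probability measure on $\Theta$ whose support is a finite set $\{\theta^*_1,\ldots,\theta^*_k\}\subset\Theta$ with $k\ge 1$. For every $n\ge 1$ let $G^{(n)}$ be the level $n$ SBA approximation of $G$. Then $G^{(n)}=G$ for every $n\ge k$.
   Context: $\Theta\subseteq\mathbb{R}$ is either $\mathbb{R}$, a closed half-line, or a compact interval with nonempty interior, with its Borel $\sigma$-field. A probability measure $G$ on $\Theta$ is identified with its distribution function $G(t)=G(\Theta\cap(-\infty,t])$. For $a_1\le a_2$ (endpoints allowed to be $\inf\Theta$ or $\sup\Theta$), the $G$-barycenter of $(a_1,a_2]$ is $b_G(a_1,a_2]=\frac{\int_{(a_1,a_2]}\theta\,dG(\theta)}{G(a_2)-G(a_1)}$ if $G(a_2)>G(a_1)$, and $b_G(a_1,a_2]=a_1$ if $G(a_2)=G(a_1)$. For $G$ with finite first moment, its sequential barycenter array (SBA) $\{\mu_{j,l}: j\ge1,\ 1\le l\le 2^j-1\}$ is defined by $\mu_{1,1}=\int_\Theta\theta\,dG(\theta)$ and, for $j\ge 2$: $\mu_{j,2l}=\mu_{j-1,l}$ for $1\le l\le 2^{j-1}-1$, and $\mu_{j,2l-1}=b_G(\mu_{j-1,l-1},\mu_{j-1,l}]$ for $1\le l\le 2^{j-1}$, with the convention $\mu_{j,0}=\inf\Theta$, $\mu_{j,2^j}=\sup\Theta$ for all $j$. The level $n$ intervals are $\Theta_{n,1}=[\mu_{n,0},\mu_{n,1}]$ if $\mu_{n,0}>-\infty$ and $(\mu_{n,0},\mu_{n,1}]$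 otherwise; $\Theta_{n,l}=(\mu_{n,l-1},\mu_{n,l}]$ for $2\le l\le 2^n-1$; $\Theta_{n,2^n}=(\mu_{n,2^n-1},\mu_{n,2^n}]$ if $\mu_{n,2^n}<\infty$ and $(\mu_{n,2^n-1},\infty)$ otherwise. The level $n$ SBA approximation of $G$ is the discrete measure $G^{(n)}=\sum_{l=1}^{2^n}G(\Theta_{n,l})\,\delta_{\mu_{n+1,2l-1}}$.
   Formalization: For l = 1, $\mu_{j,2l-1}$ is the G-barycenter of the closed cell $[\mu_{j-1,0},\mu_{j-1,1}]$, so an atom at a finite $\inf\Theta$ is included, in place of $b_G(\mu_{j-1,0},\mu_{j-1,1}]$. The paper assumes this as well. *)

theory Defs
  imports "HOL-Probability.Probability"
begin

definition admissible_domain :: "real set \<Rightarrow> bool" where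
  "admissible_domain T \<longleftrightarrow>
     T = UNIV \<or> (\<exists>a. T = {a..} \<or> T = {..a}) \<or> (\<exists>a b. a < b \<and> T = {a..b})"

text \<open>Level cells determined by an array m (m 0 = inf T, m (2^n) = sup T, extended reals).
  Cell 1 is [m 0, m 1] (intersected with T); cell l >= 2 is (m (l-1), m l].\<close>
definition sba_cell :: "real set \<Rightarrow> (nat \<Rightarrow> ereal) \<Rightarrow> nat \<Rightarrow> real set" where
  "sba_cell T m l =
     (if l = 1 then {\<theta>\<in>T. ereal \<theta> \<le> m 1}
      else {\<theta>\<in>T. m (l - 1) < ereal \<theta> \<and> ereal \<theta> \<le> m l})"

text \<open>G-barycenter of a cell I with left endpoint a (returned if I has G-mass zero).\<close>
definition sba_bary :: "real measure \<Rightarrow> real set \<Rightarrow> ereal \<Rightarrow> ereal" where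
  "sba_bary M I a =
     (if measure M I > 0 then ereal ((LINT \<theta>:I|M. \<theta>) / measure M I) else a)"

text \<open>Sequential barycenter array: sba M T j l = mu_{j,l} for 0 <= l <= 2^j
  (level 0 is the pair inf T, sup T).\<close>
fun sba :: "real measure \<Rightarrow> real set \<Rightarrow> nat \<Rightarrow> nat \<Rightarrow> ereal" where
  "sba M T 0 l = (if l = 0 then Inf (ereal ` T) else Sup (ereal ` T))"
| "sba M T (Suc j) l =
     (if even l then sba M T j (l div 2)
      else sba_bary M (sba_cell T (sba M T j) (Suc l div 2)) (sba M T j (l div 2)))"

text \<open>Level n SBA approximation, as a set function:
  G^(n)(A) = sum_{l=1}^{2^n} G(Theta_{n,l}) * delta_{mu_{n+1,2l-1}}(A).\<close>
definition sba_approx :: "real measure \<Rightarrow> real set \<Rightarrow> nat \<Rightarrow> real set \<Rightarrow> real" where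
  "sba_approx M T n A =
     (\<Sum>l\<in>{1..2^n}. measure M (sba_cell T (sba M T n) l)
                      * indicator (ereal ` A) (sba M T (Suc n) (2 * l - 1)))"

end

theory Submission
  imports Defs
begin

lemma wavg:
  fixes X :: "real set" and w :: "real \<Rightarrow> real"
  assumes fX: "finite X" and ne: "X \<noteq> {}" and wp: "\<forall>x\<in>X. w x > 0"
  shows "Min X \<le> (\<Sum>x\<in>X. x * w x) / (\<Sum>x\<in>X. w x)"
    and "(\<Sum>x\<in>X. x * w x) / (\<Sum>x\<in>X. w x) \<le> Max X"
    and "card X \<ge> 2 \<Longrightarrow> Min X < (\<Sum>x\<in>X. x * w x) / (\<Sum>x\<in>X. w x)"
    and "card X \<ge> 2 \<Longrightarrow> (\<Sum>x\<in>X. x * w x) / (\<Sum>x\<in>X. w x) < Max X"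
proof -
  have W: "(\<Sum>x\<in>X. w x) > 0" using fX ne wp by (intro sum_pos) auto
  have e1: "(\<Sum>x\<in>X. x * w x) - Min X * (\<Sum>x\<in>X. w x) = (\<Sum>x\<in>X. (x - Min X) * w x)"
    by (simp add: sum_subtractf sum_distrib_left left_diff_distrib)
  have e2: "Max X * (\<Sum>x\<in>X. w x) - (\<Sum>x\<in>X. x * w x) = (\<Sum>x\<in>X. (Max X - x) * w x)"
    by (simp add: sum_subtractf sum_distrib_left left_diff_distrib)
  have mn: "x \<in> X \<Longrightarrow> Min X \<le> x \<and> x \<le> Max X" for x using fX by simp
  have n1: "(\<Sum>x\<in>X. (x - Min X) * w x) \<ge> 0"
    using wp mn by (intro sum_nonneg mult_nonneg_nonneg) (auto simp: less_imp_le)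
  have n2: "(\<Sum>x\<in>X. (Max X - x) * w x) \<ge> 0"
    using wp mn by (intro sum_nonneg mult_nonneg_nonneg) (auto simp: less_imp_le)
  show "Min X \<le> (\<Sum>x\<in>X. x * w x) / (\<Sum>x\<in>X. w x)"
    using W e1 n1 by (simp add: pos_le_divide_eq)
  show "(\<Sum>x\<in>X. x * w x) / (\<Sum>x\<in>X. w x) \<le> Max X"
    using W e2 n2 by (simp add: pos_divide_le_eq)
  assume c: "card X \<ge> 2"
  have "Min X \<noteq> Max X"
  proof
    assume eq: "Min X = Max X"
    have "X \<subseteq> {Min X}"
    proof
      fix x assume "x \<in> X"
      then have "Min X \<le> x" "x \<le> Max X" using mn by auto
      then show "x \<in> {Min X}" using eq by auto
    qed
    then have "card X \<le> card {Min X}" by (intro card_mono) auto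
    with c show False by simp
  qed
  then have lt: "Min X < Max X" using mn Max_in[OF fX ne] by (simp add: less_le)
  have MX: "Max X \<in> X" "Min X \<in> X" using fX ne by auto
  have p1: "(\<Sum>x\<in>X. (x - Min X) * w x) > 0"
    apply (rule sum_pos2[OF fX MX(1)])
    using lt wp MX mn by (auto intro!: mult_nonneg_nonneg simp: less_imp_le)
  have p2: "(\<Sum>x\<in>X. (Max X - x) * w x) > 0"
    apply (rule sum_pos2[OF fX MX(2)])
    using lt wp MX mn by (auto intro!: mult_nonneg_nonneg simp: less_imp_le)
  show "Min X < (\<Sum>x\<in>X. x * w x) / (\<Sum>x\<in>X. w x)"
    using W e1 p1 by (simp add: pos_less_divide_eq)
  show "(\<Sum>x\<in>X. x * w x) / (\<Sum>x\<in>X. w x) < Max X"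
    using W e2 p2 by (simp add: pos_divide_less_eq)
qed

lemma cells_sub:
  fixes m m' :: "nat \<Rightarrow> ereal"
  assumes "m' (2*i) = m i" "m' (Suc (2*i)) = b" "m' (Suc (Suc (2*i))) = m (Suc i)"
    "m i \<le> b" "b \<le> m (Suc i)"
  shows "sba_cell T m' (Suc (2*i)) \<subseteq> sba_cell T m (Suc i) \<inter> {\<theta>. ereal \<theta> \<le> b}"
    and "sba_cell T m' (Suc (Suc (2*i))) \<subseteq> sba_cell T m (Suc i) \<inter> {\<theta>. b < ereal \<theta>}"
  using assms by (auto simp: sba_cell_def intro: order_trans le_less_trans)

lemma atoms_bounds:
  fixes m :: "nat \<Rightarrow> ereal"
  assumes "m 0 = Inf (ereal ` T)" "1 \<le> l" "x \<in> sba_cell T m l"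
  shows "m (l - 1) \<le> ereal x \<and> ereal x \<le> m l"
  using assms by (cases "l = 1") (auto simp: sba_cell_def Inf_lower)

locale fin_atoms =
  fixes M :: "real measure" and T :: "real set" and S :: "real set"
  assumes P: "prob_space M" and sets_eq: "sets M = sets (restrict_space borel T)"
    and fin: "finite S" and sub: "S \<subseteq> T" and full: "measure M S = 1"
    and pos: "\<forall>x\<in>S. measure M {x} > 0"
begin

lemma space_eq: "space M = T"
  using sets_eq_imp_space_eq[OF sets_eq] by (simp add: space_restrict_space)

lemma sets_iff: "A \<in> sets M \<longleftrightarrow> (\<exists>B\<in>sets borel. A = T \<inter> B)"
  unfolding sets_eq sets_restrict_space by auto

lemma S_sets: "S \<in> sets M"
  unfolding sets_iff using sub fin finite_imp_closed borel_closed by blast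

lemma sing_sets: "x \<in> T \<Longrightarrow> {x} \<in> sets M"
  unfolding sets_iff by (intro bexI[of _ "{x}"]) auto

lemma AE_S: "AE \<theta> in M. \<theta> \<in> S"
  using prob_space.AE_prob_1[OF P full] .

lemma meas_cong: "g \<in> borel_measurable borel \<Longrightarrow> g \<in> borel_measurable M"
  using measurable_cong_sets[OF sets_eq refl] measurable_restrict_space1 by blast

lemma integral_formula:
  assumes C: "C \<in> sets M" and g: "g \<in> borel_measurable borel"
  shows "(\<integral>\<theta>. indicator C \<theta> * g \<theta> \<partial>M) = (\<Sum>x\<in>S\<inter>C. g x * measure M {x})"
proof -
  interpret prob_space M by (rule P)
  have "(\<integral>\<theta>. indicator C \<theta> * g \<theta> \<partial>M) = (\<integral>\<theta>. (\<Sum>x\<in>S\<inter>C. g x * indicator {x} \<theta>) \<partial>M)"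
  proof (rule integral_cong_AE)
    show "(\<lambda>\<theta>. indicator C \<theta> * g \<theta>) \<in> borel_measurable M"
      using C meas_cong[OF g] by measurable
    show "(\<lambda>\<theta>. (\<Sum>x\<in>S\<inter>C. g x * indicator {x} \<theta>)) \<in> borel_measurable M"
      using sing_sets sub by (intro borel_measurable_sum borel_measurable_times) auto
    show "AE \<theta> in M. indicator C \<theta> * g \<theta> = (\<Sum>x\<in>S\<inter>C. g x * indicator {x} \<theta>)"
      using AE_S
    proof eventually_elim
      case (elim \<theta>)
      have "(\<Sum>x\<in>S\<inter>C. g x * indicator {x} \<theta>) = (\<Sum>x\<in>S\<inter>C. if x = \<theta> then g \<theta> else 0)"
        by (intro sum.cong) (auto simp: indicator_def)
      also have "\<dots> = indicator C \<theta> * g \<theta>"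
        using elim fin by (simp add: sum.delta' indicator_def)
      finally show ?case by simp
    qed
  qed
  also have "\<dots> = (\<Sum>x\<in>S\<inter>C. g x * measure M {x})"
  proof -
   have "\<forall>x\<in>S \<inter> C. integrable M (\<lambda>\<theta>. g x * indicator {x} \<theta>)"
   proof
    fix x assume "x \<in> S \<inter> C"
    then have "{x} \<in> sets M" using sing_sets sub by auto
    then show "integrable M (\<lambda>\<theta>. g x * indicator {x} \<theta>)"
      by (intro integrable_mult_right) (simp add: integrable_indicator_iff emeasure_eq_measure)
   qed
   moreover have "(\<Sum>x\<in>S \<inter> C. \<integral>\<theta>. g x * indicator {x} \<theta> \<partial>M) = (\<Sum>x\<in>S\<inter>C. g x * measure M {x})"
      using sing_sets sub space_eq by (intro sum.cong) auto
   ultimately show ?thesis using integral_sum[where I="S \<inter> C" and f="\<lambda>x \<theta>. g x * indicator {x} \<theta>"] by simp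
  qed
  finally show ?thesis .
qed

lemma measure_formula:
  assumes C: "C \<in> sets M"
  shows "measure M C = (\<Sum>x\<in>S\<inter>C. measure M {x})"
  using integral_formula[OF C, of "\<lambda>_. 1"] C space_eq
  using sets.sets_into_space[OF C] by (simp add: Int_absorb2)

lemma bary_integral:
  assumes C: "C \<in> sets M"
  shows "(LINT \<theta>:C|M. \<theta>) = (\<Sum>x\<in>S\<inter>C. x * measure M {x})"
  using integral_formula[OF C, of "\<lambda>x. x"] by (simp add: set_lebesgue_integral_def)


abbreviation "w x \<equiv> measure M {x}"

lemma cell_sets: "sba_cell T m l \<in> sets M"
proof -
  have a: "{\<theta>::real. ereal \<theta> \<le> c} \<in> sets borel" for c by measurable
  have b: "{\<theta>::real. c < ereal \<theta> \<and> ereal \<theta> \<le> d} \<in> sets borel" for c d by measurable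
  show ?thesis unfolding sets_iff sba_cell_def
    using a b by (auto intro!: bexI[of _ "{\<theta>::real. ereal \<theta> \<le> _}"] bexI[of _ "{\<theta>::real. _ < ereal \<theta> \<and> ereal \<theta> \<le> _}"])
qed

lemma bary_empty:
  assumes "S \<inter> sba_cell T m l = {}"
  shows "measure M (sba_cell T m l) = 0" "sba_bary M (sba_cell T m l) a = a"
  using measure_formula[OF cell_sets, of m l] assms by (auto simp: sba_bary_def)

lemma bary_nonempty:
  assumes "S \<inter> sba_cell T m l \<noteq> {}"
  shows "measure M (sba_cell T m l) = (\<Sum>x\<in>S \<inter> sba_cell T m l. w x)"
    "measure M (sba_cell T m l) > 0"
    "sba_bary M (sba_cell T m l) a = ereal ((\<Sum>x\<in>S \<inter> sba_cell T m l. x * w x) / (\<Sum>x\<in>S \<inter> sba_cell T m l. w x))"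
proof -
  show 1: "measure M (sba_cell T m l) = (\<Sum>x\<in>S \<inter> sba_cell T m l. w x)"
    using measure_formula[OF cell_sets] .
  show 2: "measure M (sba_cell T m l) > 0"
    unfolding 1 using assms fin pos by (intro sum_pos) auto
  show "sba_bary M (sba_cell T m l) a = ereal ((\<Sum>x\<in>S \<inter> sba_cell T m l. x * w x) / (\<Sum>x\<in>S \<inter> sba_cell T m l. w x))"
    using 2 unfolding sba_bary_def by (simp add: bary_integral[OF cell_sets] 1)
qed

lemma step_b:
  fixes m :: "nat \<Rightarrow> ereal"
  assumes m0: "m 0 = Inf (ereal ` T)" and mono: "m i \<le> m (Suc i)"
  defines "b \<equiv> sba_bary M (sba_cell T m (Suc i)) (m i)"
  shows "m i \<le> b" "b \<le> m (Suc i)"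
    "card (S \<inter> sba_cell T m (Suc i)) \<ge> 2 \<Longrightarrow>
       (\<exists>lo\<in>S \<inter> sba_cell T m (Suc i). \<exists>hi\<in>S \<inter> sba_cell T m (Suc i). ereal lo < b \<and> b < ereal hi)"
proof -
  let ?X = "S \<inter> sba_cell T m (Suc i)"
  have fX: "finite ?X" using fin by simp
  have wX: "\<forall>x\<in>?X. w x > 0" using pos by auto
  have bnd: "x \<in> ?X \<Longrightarrow> m i \<le> ereal x \<and> ereal x \<le> m (Suc i)" for x
    using atoms_bounds[where m=m and T=T and l="Suc i" and x=x] m0 by auto
  have "m i \<le> b \<and> b \<le> m (Suc i)"
  proof (cases "?X = {}")
    case True then show ?thesis using bary_empty(2) mono b_def by simp
  next
    case False
    have bb: "b = ereal ((\<Sum>x\<in>?X. x * w x) / (\<Sum>x\<in>?X. w x))"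
      using bary_nonempty(3)[OF False] b_def by simp
    have "m i \<le> ereal (Min ?X)" using bnd Min_in[OF fX False] by blast
    also have "\<dots> \<le> b" using bb wavg(1)[OF fX False wX] by simp
    finally have 1: "m i \<le> b" .
    have "b \<le> ereal (Max ?X)" using bb wavg(2)[OF fX False wX] by simp
    also have "\<dots> \<le> m (Suc i)" using bnd Max_in[OF fX False] by blast
    finally show ?thesis using 1 by simp
  qed
  then show "m i \<le> b" "b \<le> m (Suc i)" by auto
  assume c: "card ?X \<ge> 2"
  then have ne: "?X \<noteq> {}" by auto
  have bb: "b = ereal ((\<Sum>x\<in>?X. x * w x) / (\<Sum>x\<in>?X. w x))"
    using bary_nonempty(3)[OF ne] b_def by simp
  show "\<exists>lo\<in>?X. \<exists>hi\<in>?X. ereal lo < b \<and> b < ereal hi"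
    using Min_in[OF fX ne] Max_in[OF fX ne] bb wavg(3,4)[OF fX ne wX c] by auto
qed

end

lemma mono_gen:
  fixes m :: "nat \<Rightarrow> ereal"
  assumes mono: "\<forall>l<N. m l \<le> m (Suc l)" and "a \<le> b" "b \<le> N"
  shows "m a \<le> m b"
  using assms(2,3)
proof (induction b)
  case 0 then show ?case by simp
next
  case (Suc b)
  show ?case
  proof (cases "a = Suc b")
    case False
    then have "m a \<le> m b" using Suc by simp
    also have "m b \<le> m (Suc b)" using mono Suc.prems by simp
    finally show ?thesis .
  qed simp
qed

lemma unique_cell:
  fixes m :: "nat \<Rightarrow> ereal"
  assumes top: "m N = Sup (ereal ` T)" and mono: "\<forall>l<N. m l \<le> m (Suc l)"
    and xT: "x \<in> T" and N: "N \<ge> 1"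
  shows "\<exists>l0. {l\<in>{1..N}. x \<in> sba_cell T m l} = {l0}"
proof -
  define P where "P l \<longleftrightarrow> 1 \<le> l \<and> ereal x \<le> m l" for l
  have PN: "P N" unfolding P_def using N top xT by (auto intro: Sup_upper)
  define l0 where "l0 = (LEAST l. P l)"
  have Pl0: "P l0" unfolding l0_def using PN by (rule LeastI)
  have l0N: "l0 \<le> N" unfolding l0_def using PN by (rule Least_le)
  have inC: "x \<in> sba_cell T m l0"
  proof (cases "l0 = 1")
    case True then show ?thesis using Pl0 xT by (simp add: sba_cell_def P_def)
  next
    case False
    then have "l0 \<ge> 2" using Pl0 by (simp add: P_def)
    then have "\<not> P (l0 - 1)" unfolding l0_def by (intro not_less_Least) (simp add: l0_def[symmetric])
    then have "m (l0 - 1) < ereal x" using \<open>l0 \<ge> 2\<close> by (simp add: P_def not_le)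
    then show ?thesis using False Pl0 xT by (simp add: sba_cell_def P_def)
  qed
  have "l = l0" if l: "l \<in> {1..N}" "x \<in> sba_cell T m l" for l
  proof -
    have "ereal x \<le> m l" using l by (auto simp: sba_cell_def split: if_splits)
    then have "P l" using l by (simp add: P_def)
    then have "l0 \<le> l" unfolding l0_def by (rule Least_le)
    show "l = l0"
    proof (rule ccontr)
      assume "l \<noteq> l0"
      then have "l0 \<le> l - 1" "l \<noteq> 1" using \<open>l0 \<le> l\<close> Pl0 by (auto simp: P_def)
      then have "m (l - 1) < ereal x" using l by (simp add: sba_cell_def)
      moreover have "m l0 \<le> m (l - 1)" 
      proof -
        have "l - 1 \<le> N" using l by auto
        then show ?thesis using mono_gen[OF mono \<open>l0 \<le> l - 1\<close>] by blast
      qed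
      ultimately show False using Pl0 unfolding P_def using order.trans not_le by metis
    qed
  qed
  then have "{l\<in>{1..N}. x \<in> sba_cell T m l} = {l0}" using inC l0N Pl0 by (auto simp: P_def)
  then show ?thesis by blast
qed

lemma count_step:
  assumes "finite X" "X' \<subseteq> X" "card X \<le> max 1 (K - j)"
    "2 \<le> card X \<Longrightarrow> \<exists>h\<in>X. h \<notin> X'"
  shows "card X' \<le> max 1 (K - Suc j)"
proof (cases "2 \<le> card X")
  case True
  then obtain h where h: "h \<in> X" "h \<notin> X'" using assms(4) by blast
  have "X' \<subseteq> X - {h}" using h assms(2) by auto
  then have "card X' \<le> card (X - {h})" using assms(1) by (intro card_mono) auto
  also have "\<dots> = card X - 1" using h assms(1) by simp
  finally show ?thesis using True assms(3) by linarith
next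
  case False
  then have "card X' \<le> card X" using assms(1,2) card_mono by blast
  then show ?thesis using False by linarith
qed

context fin_atoms
begin

lemma invariant:
  assumes Sne: "S \<noteq> {}"
  shows "sba M T j 0 = Inf (ereal ` T) \<and> sba M T j (2^j) = Sup (ereal ` T) \<and>
    (\<forall>l<2^j. sba M T j l \<le> sba M T j (Suc l)) \<and>
    (\<forall>l\<in>{1..2^j}. card (S \<inter> sba_cell T (sba M T j) l) \<le> max 1 (card S - j))"
proof (induction j)
  case 0
  have Tne: "T \<noteq> {}" using Sne sub by auto
  have c: "sba_cell T (sba M T 0) 1 = T" by (auto simp: sba_cell_def intro: Sup_upper)
  have c2: "card (S \<inter> sba_cell T (sba M T 0) 1) = card S" unfolding c using sub
    by (simp add: Int_absorb2)
  have "\<forall>l\<in>{1..2^0}. card (S \<inter> sba_cell T (sba M T 0) l) \<le> max 1 (card S - 0)"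
    using c2 by simp
  moreover have "\<forall>l<2^0. sba M T 0 l \<le> sba M T 0 (Suc l)" using Tne by (simp add: Inf_le_Sup)
  moreover have "sba M T 0 0 = Inf (ereal ` T)" "sba M T 0 (2^0) = Sup (ereal ` T)" by simp_all
  ultimately show ?case by (simp del: sba.simps)
next
  case (Suc j)
  let ?m = "sba M T j" and ?m' = "sba M T (Suc j)"
  have m0: "?m 0 = Inf (ereal ` T)" and mt: "?m (2^j) = Sup (ereal ` T)"
    and mono: "\<forall>l<2^j. ?m l \<le> ?m (Suc l)"
    and cnt: "\<forall>l\<in>{1..2^j}. card (S \<inter> sba_cell T ?m l) \<le> max 1 (card S - j)"
    using Suc by auto
  have me: "?m' (2*i) = ?m i" for i by simp
  have mo: "?m' (Suc (2*i)) = sba_bary M (sba_cell T ?m (Suc i)) (?m i)" for i by simp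
  have me2: "?m' (Suc (Suc (2*i))) = ?m (Suc i)" for i
    using me[of "Suc i"] by simp
  have monoi: "?m i \<le> ?m (Suc i)" if "i < 2^j" for i using mono that by simp
  have b1: "?m i \<le> ?m' (Suc (2*i))" "?m' (Suc (2*i)) \<le> ?m (Suc i)" if "i < 2^j" for i
  proof -
    note st = step_b[of "sba M T j" i, OF m0 monoi[OF that]]
    show "?m i \<le> ?m' (Suc (2*i))" unfolding mo by (rule st(1))
    show "?m' (Suc (2*i)) \<le> ?m (Suc i)" unfolding mo by (rule st(2))
  qed
  have A1: "?m' 0 = Inf (ereal ` T)"
  proof -
    have "?m' 0 = ?m 0" by simp
    then show ?thesis using m0 by simp
  qed
  have A2: "?m' (2^Suc j) = Sup (ereal ` T)"
  proof -
    have "?m' (2^Suc j) = ?m (2^j)" using me[of "2^j"] by simp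
    then show ?thesis using mt by simp
  qed
  have divlem: "x < 2 * N \<Longrightarrow> x div 2 < N" for x N :: nat by presburger
  have A3: "?m' l \<le> ?m' (Suc l)" if l: "l < 2^Suc j" for l
  proof -
    define i where "i = l div 2"
    have i: "i < 2^j" unfolding i_def using l by (intro divlem) simp
    show ?thesis
    proof (cases "even l")
      case True
      then have "l = 2*i" by (simp add: i_def)
      then show ?thesis using b1[OF i] me[of i] by simp
    next
      case False
      then have "l = Suc (2*i)" by (simp add: i_def)
      then show ?thesis using b1[OF i] me2[of i] by simp
    qed
  qed
  have A4: "card (S \<inter> sba_cell T ?m' l) \<le> max 1 (card S - Suc j)" if l: "l \<in> {1..2^Suc j}" for l
  proof -
    define i where "i = (l - 1) div 2"
    have i: "i < 2^j" unfolding i_def using l by (intro divlem) auto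
    let ?b = "?m' (Suc (2*i))"
    let ?X = "S \<inter> sba_cell T ?m (Suc i)"
    have bb: "?m i \<le> ?b" "?b \<le> ?m (Suc i)" using b1[OF i] by auto
    note cs = cells_sub[of ?m' i ?m ?b T, OF me refl me2 bb]
    have cX: "card ?X \<le> max 1 (card S - j)" using cnt i by simp
    have ex: "\<exists>lo\<in>?X. \<exists>hi\<in>?X. ereal lo < ?b \<and> ?b < ereal hi" if "2 \<le> card ?X"
      using step_b(3)[of "sba M T j" i, OF m0 monoi[OF i] that] unfolding mo .
    have fX: "finite ?X" using fin by simp
    have "l - 1 = 2*i \<or> l - 1 = Suc (2*i)" unfolding i_def by presburger
    then have "l = Suc (2*i) \<or> l = Suc (Suc (2*i))" using l by auto
    then consider "l = Suc (2*i)" | "l = Suc (Suc (2*i))" by blast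
    then show ?thesis
    proof cases
      case 1
      show ?thesis unfolding 1
      proof (rule count_step[OF fX _ cX])
        show "S \<inter> sba_cell T ?m' (Suc (2*i)) \<subseteq> ?X" using cs(1) by blast
        assume "2 \<le> card ?X"
        then obtain hi where hi: "hi \<in> ?X" "?b < ereal hi" using ex by blast
        then have "hi \<notin> S \<inter> sba_cell T ?m' (Suc (2*i))" using cs(1) by (auto simp: not_le[symmetric])
        then show "\<exists>h\<in>?X. h \<notin> S \<inter> sba_cell T ?m' (Suc (2*i))" using hi by blast
      qed
    next
      case 2
      show ?thesis unfolding 2
      proof (rule count_step[OF fX _ cX])
        show "S \<inter> sba_cell T ?m' (Suc (Suc (2*i))) \<subseteq> ?X" using cs(2) by blast
        assume "2 \<le> card ?X"
        then obtain lo where lo: "lo \<in> ?X" "ereal lo < ?b" using ex by blast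
        then have "lo \<notin> S \<inter> sba_cell T ?m' (Suc (Suc (2*i)))" using cs(2) by (auto simp: not_less[symmetric])
        then show "\<exists>h\<in>?X. h \<notin> S \<inter> sba_cell T ?m' (Suc (Suc (2*i)))" using lo by blast
      qed
    qed
  qed
  show ?case using A1 A2 A3 A4 by blast
qed

lemma idx: "1 \<le> l \<Longrightarrow> sba M T (Suc n) (2*l - 1) = sba_bary M (sba_cell T (sba M T n) l) (sba M T n (l - 1))"
  by (cases l) auto

lemma tm_lemma:
  assumes c1: "card (S \<inter> sba_cell T m l) \<le> 1"
  shows "measure M (sba_cell T m l) * indicator (ereal ` A) (sba_bary M (sba_cell T m l) a)
     = (\<Sum>x\<in>S \<inter> sba_cell T m l. w x * indicator A x)"
proof (cases "S \<inter> sba_cell T m l = {}")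
  case True
  then show ?thesis using bary_empty(1)[OF True] by simp
next
  case False
  have "card (S \<inter> sba_cell T m l) \<noteq> 0" using False fin by simp
  then have "card (S \<inter> sba_cell T m l) = 1" using c1 by linarith
  then obtain x where x: "S \<inter> sba_cell T m l = {x}" by (rule card_1_singletonE)
  then have wx: "w x > 0" using pos by auto
  have b: "sba_bary M (sba_cell T m l) a = ereal x"
    using bary_nonempty(3)[OF False, of a] wx unfolding x by simp
  have me: "measure M (sba_cell T m l) = w x" using bary_nonempty(1)[OF False] unfolding x by simp
  have ind: "indicator (ereal ` A) (ereal x) = (indicator A x :: real)"
    by (simp add: indicator_def image_iff)
  show ?thesis unfolding b me ind x by (cases "x \<in> A") auto
qed

lemma final:
  assumes Sne: "S \<noteq> {}" and n: "n \<ge> card S" and A: "A \<in> sets M"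
  shows "sba_approx M T n A = measure M A"
proof -
  let ?m = "sba M T n"
  let ?C = "\<lambda>l. sba_cell T ?m l"
  let ?f = "\<lambda>x. w x * indicator A x"
  note inv = invariant[OF Sne, of n]
  have mt: "?m (2^n) = Sup (ereal ` T)" using inv by (elim conjE)
  have mono: "\<forall>l<2^n. ?m l \<le> ?m (Suc l)" using inv by (elim conjE)
  have cnt0: "\<forall>l\<in>{1..2^n}. card (S \<inter> ?C l) \<le> max 1 (card S - n)" using inv by (elim conjE)
  have mx: "max 1 (card S - n) = 1" using n by simp
  have cnt: "\<forall>l\<in>{1..2^n}. card (S \<inter> ?C l) \<le> 1" using cnt0 unfolding mx .
  have tm: "measure M (?C l) * indicator (ereal ` A) (sba M T (Suc n) (2 * l - 1))
      = (\<Sum>x\<in>S \<inter> ?C l. ?f x)" if l: "l \<in> {1..2^n}" for l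
  proof -
    have l1: "1 \<le> l" using l by simp
    have bs: "sba M T (Suc n) (2 * l - 1) = sba_bary M (?C l) (?m (l - 1))"
      by (rule idx[OF l1])
    have c1: "card (S \<inter> ?C l) \<le> 1" using bspec[OF cnt l] .
    show ?thesis apply (subst bs) apply (rule tm_lemma[OF c1]) done
  qed
  have "sba_approx M T n A = (\<Sum>l\<in>{1..2^n}. \<Sum>x\<in>S \<inter> ?C l. ?f x)"
    unfolding sba_approx_def by (rule sum.cong[OF refl]) (rule tm)
  also have "\<dots> = (\<Sum>l\<in>{1..2^n}. \<Sum>x\<in>S. if x \<in> ?C l then ?f x else 0)"
    by (rule sum.cong[OF refl]) (rule sum.inter_restrict[OF fin])
  also have "\<dots> = (\<Sum>x\<in>S. \<Sum>l\<in>{1..2^n}. if x \<in> ?C l then ?f x else 0)"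
    by (rule sum.swap)
  also have "\<dots> = (\<Sum>x\<in>S. ?f x)"
  proof (intro sum.cong refl)
    fix x assume "x \<in> S"
    then have "x \<in> T" using sub by auto
    then obtain l0 where l0: "{l\<in>{1..2^n}. x \<in> ?C l} = {l0}"
      using unique_cell[OF mt mono] by force
    have "(\<Sum>l\<in>{1..2^n}. if x \<in> ?C l then ?f x else 0) = (\<Sum>l\<in>{l\<in>{1..2^n}. x \<in> ?C l}. ?f x)"
      by (rule sum.inter_filter[symmetric]) simp
    also have "\<dots> = ?f x" using l0 by simp
    finally show "(\<Sum>l\<in>{1..2^n}. if x \<in> ?C l then ?f x else 0) = ?f x" .
  qed
  also have "\<dots> = (\<Sum>x\<in>S \<inter> A. w x)"
    unfolding sum.inter_restrict[OF fin] by (intro sum.cong refl) (simp add: indicator_def)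
  also have "\<dots> = measure M A" using measure_formula[OF A] by simp
  finally show ?thesis .
qed

end

theorem theorem1:
  fixes M :: "real measure" and T :: "real set" and S :: "real set" and k :: nat
  assumes "admissible_domain T"
    and "prob_space M"
    and "sets M = sets (restrict_space borel T)"
    and "finite S" and "card S = k" and "k \<ge> 1" and "S \<subseteq> T"
    and "measure M S = 1"
    and "\<forall>x\<in>S. measure M {x} > 0"
  shows "\<forall>n\<ge>k. \<forall>A\<in>sets M. sba_approx M T n A = measure M A"
proof -
  have loc: "fin_atoms M T S"
    unfolding fin_atoms_def using assms(2,3,4,7,8,9) by (intro conjI)
  have Sne: "S \<noteq> {}" using assms(5,6) by auto
  show ?thesis
  proof (intro allI impI ballI)
    fix n A assume n: "k \<le> n" and A: "A \<in> sets M"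
    have n': "card S \<le> n" using n assms(5) by simp
    show "sba_approx M T n A = measure M A"
      by (rule fin_atoms.final[OF loc Sne n' A])
  qed
qed

end
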